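(* As operators on holomorphic $V_\tau$-valued functions $f$ on $\Omega$, $$\mathcal{H}_M:=L(x)\sum_{i=1}^N(\mathcal{U}_i-1-\kappa\gamma)^2L(x)^{-1}=\sum_{i=1}^N(x_i\partial_i)^2-2\kappa\sum_{1\le i<j\le N}\frac{x_ix_j}{(x_i-x_j)^2}\bigl(\kappa-\sigma^M(i,j)\bigr).$$
   Context: Setup: $\tau$ is a partition of $N$ (not $(N)$, $(1^N)$) identified with the irreducible orthogonal representation of $\mathcal{S}_N$ on $V_\tau\cong\mathbb{C}^{n_\tau}$ (orthonormal basis), $\tau(i,j):=\tau((i,j))$. $c(i,T)=(\text{column of }i)-(\text{row of }i)$ in a standard tableau $T$, $S_1(\tau)=\sum_ic(i,T)$, $\gamma=S_1(\tau)/N$. $\mathcal{S}_N$ acts on $x$ by $(xw)_i=x_{w(i)}$. $\mathbb{C}^N_{reg}=\{x\in(\mathbb{C}\setminus\{0\})^N:x_i\neq x_j,\ i\ne j\}$; $\Omega\subset\mathbb{C}^N_{reg}$ is open with $\Omega w=\Omega$ for all $w$. $L:\Omega\to GL_{n_\tau}(\mathbb{C})$ is holomorphic and satisfies $\partial_iL(x)=\kappa L(x)\bigl\{\sum_{j\ne i}\frac{\tau(i,j)}{x_i-x_j}-\frac{\gamma}{x_i}I\bigr\}$, $1\le i\le N$ ($\kappa\in\mathbb{R}$). $M:\mathcal{S}_N\times\Omega\to GL_{n_\tau}(\mathbb{C})$ is locally constant in $x$ with $M(I,x)=I$, $M(w_1w_2,x)=M(w_2,xw_1)M(w_1,x)$,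 and $L(xw)=M(w,x)L(x)\tau(w)$. $(\sigma^M(w)f)(x)=M(w,x)^{-1}f(xw)$. The operators $\mathcal{D}_i g(x)=\partial_ig(x)+\kappa\sum_{j\ne i}\tau(i,j)\frac{g(x)-g(x(i,j))}{x_i-x_j}$ and $\mathcal{U}_ig(x)=\mathcal{D}_i(x_ig)(x)-\kappa\sum_{j<i}\tau(i,j)g(x(i,j))$ are applied to holomorphic $V_\tau$-valued functions $g$ on $\Omega$. *)

theory Defs
  imports "HOL-Analysis.Analysis"
begin

(* Coordinates of C^N are indexed by a finite linearly ordered type 'n with N = CARD('n);
   V_tau = C^{n_tau} is complex^'k with n_tau = CARD('k). *)

definition is_partition :: "nat list \<Rightarrow> nat \<Rightarrow> bool" where
  "is_partition lam N \<longleftrightarrow> sorted (rev lam) \<and> (\<forall>p\<in>set lam. 0 < p) \<and> sum_list lam = N"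

(* cells (row, column), 0-based *)
definition diagram :: "nat list \<Rightarrow> (nat \<times> nat) set" where
  "diagram lam = {(r, c). r < length lam \<and> c < lam ! r}"

(* a standard tableau filled with the entries of 'n, given by the position of each entry *)
definition SYT :: "nat list \<Rightarrow> ('n::{finite,linorder} \<Rightarrow> nat \<times> nat) set" where
  "SYT lam = {P. bij_betw P UNIV (diagram lam)
      \<and> (\<forall>i j. fst (P j) = fst (P i) \<and> snd (P j) = Suc (snd (P i)) \<longrightarrow> i < j)
      \<and> (\<forall>i j. fst (P j) = Suc (fst (P i)) \<and> snd (P j) = snd (P i) \<longrightarrow> i < j)}"

definition content :: "'n \<Rightarrow> ('n \<Rightarrow> nat \<times> nat) \<Rightarrow> int" where
  "content i P = int (snd (P i)) - int (fst (P i))"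

(* S_1(tau) = sum_i c(i,T), independent of the standard tableau T *)
definition S1 :: "nat list \<Rightarrow> int" where
  "S1 lam = (\<Sum>(r, c)\<in>diagram lam. int c - int r)"

definition adjacent :: "'n::linorder \<Rightarrow> 'n \<Rightarrow> bool" where
  "adjacent s s' \<longleftrightarrow> s < s' \<and> (\<forall>t. \<not> (s < t \<and> t < s'))"

(* Young's orthogonal form of the adjacent transposition (s,s'), in the basis e_{b T}, T standard *)
definition young_adj :: "nat list \<Rightarrow> (('n::{finite,linorder} \<Rightarrow> nat \<times> nat) \<Rightarrow> 'k::finite)
    \<Rightarrow> 'n \<Rightarrow> 'n \<Rightarrow> complex^'k^'k" where
  "young_adj lam b s s' = (\<chi> a c.
     let T = inv_into (SYT lam) b c; U = inv_into (SYT lam) b a;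
         r = content s' T - content s T
     in if U = T then complex_of_real (1 / real_of_int r)
        else if U = T \<circ> Transposition.transpose s s'
          then complex_of_real (sqrt (1 - 1 / (real_of_int r)\<^sup>2))
        else 0)"

(* rho is the irreducible real orthogonal representation of S_N labelled by lam *)
definition irrep_of :: "nat list \<Rightarrow> (('n::{finite,linorder} \<Rightarrow> 'n) \<Rightarrow> complex^'k::finite^'k) \<Rightarrow> bool" where
  "irrep_of lam rho \<longleftrightarrow>
     rho id = mat 1 \<and>
     (\<forall>w1 w2. w1 permutes UNIV \<longrightarrow> w2 permutes UNIV \<longrightarrow> rho (w1 \<circ> w2) = rho w1 ** rho w2) \<and>
     (\<exists>b Q. bij_betw b (SYT lam) (UNIV :: 'k set) \<and>
        (\<forall>a c. Q $ a $ c \<in> \<real>) \<and> transpose Q ** Q = mat 1 \<and>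
        (\<forall>s s'. adjacent s s' \<longrightarrow>
            rho (Transposition.transpose s s') = Q ** young_adj lam b s s' ** transpose Q))"

definition act :: "complex^'n \<Rightarrow> ('n \<Rightarrow> 'n) \<Rightarrow> complex^'n" where
  "act x w = (\<chi> i. x $ w i)"

definition regular :: "(complex^'n) set" where
  "regular = {x. (\<forall>i. x $ i \<noteq> 0) \<and> (\<forall>i j. i \<noteq> j \<longrightarrow> x $ i \<noteq> x $ j)}"

definition holo :: "(complex^'n \<Rightarrow> complex) \<Rightarrow> (complex^'n) set \<Rightarrow> bool" where
  "holo g S \<longleftrightarrow> (\<forall>x\<in>S. \<exists>D. (g has_derivative D) (at x) \<and> (\<forall>c v. D (c *s v) = c * D v))"

definition holo_vec :: "(complex^'n \<Rightarrow> complex^'k) \<Rightarrow> (complex^'n) set \<Rightarrow> bool" where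
  "holo_vec f S \<longleftrightarrow> (\<forall>a. holo (\<lambda>x. f x $ a) S)"

definition holo_mat :: "(complex^'n \<Rightarrow> complex^'k^'l) \<Rightarrow> (complex^'n) set \<Rightarrow> bool" where
  "holo_mat F S \<longleftrightarrow> (\<forall>a c. holo (\<lambda>x. F x $ a $ c) S)"

definition pd :: "'n \<Rightarrow> (complex^'n \<Rightarrow> complex^'k) \<Rightarrow> complex^'n \<Rightarrow> complex^'k" where
  "pd i g x = (\<chi> a. deriv (\<lambda>t. g (x + t *s axis i 1) $ a) 0)"

definition pdm :: "'n \<Rightarrow> (complex^'n \<Rightarrow> complex^'k^'l) \<Rightarrow> complex^'n \<Rightarrow> complex^'k^'l" where
  "pdm i F x = (\<chi> a c. deriv (\<lambda>t. F (x + t *s axis i 1) $ a $ c) 0)"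

definition Dop :: "real \<Rightarrow> (('n::{finite,linorder} \<Rightarrow> 'n::{finite,linorder}) \<Rightarrow> complex^'k^'k) \<Rightarrow> 'n::{finite,linorder}
    \<Rightarrow> (complex^'n::{finite,linorder} \<Rightarrow> complex^'k) \<Rightarrow> complex^'n::{finite,linorder} \<Rightarrow> complex^'k" where
  "Dop \<kappa> rho i g x = pd i g x +
     (\<Sum>j\<in>UNIV - {i}. (complex_of_real \<kappa> / (x $ i - x $ j)) *s
        (rho (Transposition.transpose i j) *v (g x - g (act x (Transposition.transpose i j)))))"

definition Uop :: "real \<Rightarrow> (('n::{finite,linorder} \<Rightarrow> 'n::{finite,linorder}) \<Rightarrow> complex^'k^'k) \<Rightarrow> 'n::{finite,linorder}
    \<Rightarrow> (complex^'n::{finite,linorder} \<Rightarrow> complex^'k) \<Rightarrow> complex^'n::{finite,linorder} \<Rightarrow> complex^'k" where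
  "Uop \<kappa> rho i g x = Dop \<kappa> rho i (\<lambda>y. (y $ i) *s g y) x -
     (\<Sum>j\<in>{j. j < i}. complex_of_real \<kappa> *s
        (rho (Transposition.transpose i j) *v g (act x (Transposition.transpose i j))))"

definition sigmaM :: "(('n \<Rightarrow> 'n) \<Rightarrow> complex^'n \<Rightarrow> complex^'k^'k) \<Rightarrow> ('n \<Rightarrow> 'n)
    \<Rightarrow> (complex^'n \<Rightarrow> complex^'k) \<Rightarrow> complex^'n \<Rightarrow> complex^'k" where
  "sigmaM M w f x = matrix_inv (M w x) *v f (act x w)"

end

theory Submission
  imports Defs "HOL-Complex_Analysis.Cauchy_Integral_Formula"
begin

lemma mv_sum: "(sum A S :: 'a::comm_ring_1^'n^'m) *v v = (\<Sum>j\<in>S. A j *v v)"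
  by (simp add: vec_eq_iff matrix_vector_mult_def sum_distrib_right sum_component; rule allI; rule sum.swap)

lemma mv_vsum: "(A::'a::comm_ring_1^'n^'m) *v (sum v S) = (\<Sum>j\<in>S. A *v v j)"
  by (simp add: vec_eq_iff matrix_vector_mult_def sum_distrib_left sum_component; rule allI; rule sum.swap)

lemma mv_add: "(A::'a::comm_ring_1^'n^'m) *v (u + v) = A *v u + A *v v"
  by (simp add: matrix_vector_right_distrib)

lemma mv_diff: "(A::'a::comm_ring_1^'n^'m) *v (u - v) = A *v u - A *v v"
  by (simp add: vec_eq_iff matrix_vector_mult_def sum_subtractf right_diff_distrib)

lemma mv_mdiff: "((A::'a::comm_ring_1^'n^'m) - B) *v v = A *v v - B *v v"
  by (simp add: vec_eq_iff matrix_vector_mult_def sum_subtractf left_diff_distrib)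

lemma mv_scale: "(A::'a::field^'n^'m) *v (c *s v) = c *s (A *v v)"
  by (rule vector_scalar_commute)

lemma ite_mult: "(if P then a else b) * (x::'a::semiring_0) = (if P then a * x else b * x)"
  by simp

lemma mat_mult_mv: "(mat c ** (A::'a::field^'n^'m)) *v v = c *s (A *v v)"
proof -
  have "mat c ** A = (\<chi> i j. c * A$i$j)"
  proof -
    have "(\<Sum>k\<in>UNIV. (if i = k then c else 0) * A$k$j) = c * A$i$j" for i j
    proof -
      have "(\<Sum>k\<in>UNIV. (if i = k then c else 0) * A$k$j) = (\<Sum>k\<in>UNIV. if k = i then c * A$k$j else 0)"
        by (rule sum.cong) auto
      then show ?thesis by simp
    qed
    then show ?thesis by (simp add: vec_eq_iff matrix_matrix_mult_def mat_def)
  qed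
  then show ?thesis by (simp add: vec_eq_iff matrix_vector_mult_def sum_distrib_left mult.assoc)
qed

lemma matmat_mv: "((A::'a::comm_ring_1^'n^'m) ** B) *v v = A *v (B *v v)"
  by (simp add: matrix_vector_mul_assoc)

lemma scaleR_mv: "(k *\<^sub>R (A::complex^'n^'m)) *v v = complex_of_real k *s (A *v v)"
  unfolding vec_eq_iff matrix_vector_mult_def
  by (simp add: sum_distrib_left  mult.assoc) (simp add: scaleR_conv_of_real)

lemma mat1_mv: "mat 1 *v (v::'a::comm_ring_1^'n) = v"
  by simp

lemma matrix_inv_right: "invertible (A::'a::field^'n^'n) \<Longrightarrow> A ** matrix_inv A = mat 1"
  unfolding invertible_def matrix_inv_def by (rule someI2_ex) auto

lemma matrix_inv_left: "invertible (A::'a::field^'n^'n) \<Longrightarrow> matrix_inv A ** A = mat 1"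
  unfolding invertible_def matrix_inv_def by (rule someI2_ex) auto

lemma inv_mv_cancel1: "invertible (A::'a::field^'n^'n) \<Longrightarrow> A *v (matrix_inv A *v v) = v"
  by (simp add: matrix_vector_mul_assoc matrix_inv_right)

lemma inv_mv_cancel2: "invertible (A::'a::field^'n^'n) \<Longrightarrow> matrix_inv A *v (A *v v) = v"
  by (simp add: matrix_vector_mul_assoc matrix_inv_left)

lemma inv_mv_eq: "invertible (A::'a::field^'n^'n) \<Longrightarrow> A *v u = v \<longleftrightarrow> u = matrix_inv A *v v"
  by (metis inv_mv_cancel1 inv_mv_cancel2)

lemma matrix_inv_mult_mv: "invertible (A::'a::field^'n^'n) \<Longrightarrow> invertible (B::'a^'n^'n) \<Longrightarrow>
   matrix_inv (A ** B) *v v = matrix_inv B *v (matrix_inv A *v v)"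
proof -
  assume a: "invertible A" "invertible B"
  have "(A ** B) *v (matrix_inv B *v (matrix_inv A *v v)) = v"
    by (simp add: matrix_vector_mul_assoc[symmetric]) (simp add: inv_mv_cancel1 a)
  then show ?thesis using inv_mv_eq[OF invertible_mult[OF a]] by metis
qed

definition hasd :: "'n::finite \<Rightarrow> (complex^'n \<Rightarrow> complex^'k) \<Rightarrow> complex^'n \<Rightarrow> complex^'k \<Rightarrow> bool" where
  "hasd i g y v \<longleftrightarrow> (\<forall>a. ((\<lambda>t. g (y + t *s axis i 1) $ a) has_field_derivative v $ a) (at 0))"

definition hasdm :: "'n::finite \<Rightarrow> (complex^'n \<Rightarrow> complex^'k^'l) \<Rightarrow> complex^'n \<Rightarrow> complex^'k^'l \<Rightarrow> bool" where
  "hasdm i F y V \<longleftrightarrow> (\<forall>a c. ((\<lambda>t. F (y + t *s axis i 1) $ a $ c) has_field_derivative V $ a $ c) (at 0))"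

definition hasds :: "'n::finite \<Rightarrow> (complex^'n \<Rightarrow> complex) \<Rightarrow> complex^'n \<Rightarrow> complex \<Rightarrow> bool" where
  "hasds i s y d \<longleftrightarrow> ((\<lambda>t. s (y + t *s axis i 1)) has_field_derivative d) (at 0)"

lemma hasd_pd: "hasd i g y v \<Longrightarrow> pd i g y = v"
  unfolding hasd_def pd_def by (simp add: vec_eq_iff DERIV_imp_deriv)

lemma hasdm_pdm: "hasdm i F y V \<Longrightarrow> pdm i F y = V"
  unfolding hasdm_def pdm_def by (simp add: vec_eq_iff DERIV_imp_deriv)

lemma hasd_add: "hasd i f y u \<Longrightarrow> hasd i g y v \<Longrightarrow> hasd i (\<lambda>z. f z + g z) y (u + v)"
  unfolding hasd_def vector_add_component by (simp add: DERIV_add)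

lemma hasd_diff: "hasd i f y u \<Longrightarrow> hasd i g y v \<Longrightarrow> hasd i (\<lambda>z. f z - g z) y (u - v)"
  unfolding hasd_def vector_minus_component by (simp add: DERIV_diff)

lemma hasd_cscale: "hasd i f y u \<Longrightarrow> hasd i (\<lambda>z. c *s f z) y (c *s u)"
  unfolding hasd_def vector_smult_component by (simp add: DERIV_cmult)

lemma hasd_sum: "finite S \<Longrightarrow> (\<And>j. j \<in> S \<Longrightarrow> hasd i (f j) y (u j)) \<Longrightarrow>
    hasd i (\<lambda>z. \<Sum>j\<in>S. f j z) y (\<Sum>j\<in>S. u j)"
  unfolding hasd_def sum_component by (simp add: DERIV_sum)

lemma hasd_scal: "hasds i s y d \<Longrightarrow> hasd i u y u' \<Longrightarrow>
    hasd i (\<lambda>z. s z *s u z) y (d *s u y + s y *s u')"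
  unfolding hasd_def hasds_def vector_smult_component vector_add_component
proof (intro allI)
  fix a assume "((\<lambda>t. s (y + t *s axis i 1)) has_field_derivative d) (at 0)"
    "\<forall>a. ((\<lambda>t. u (y + t *s axis i 1) $ a) has_field_derivative u' $ a) (at 0)"
  from DERIV_mult[OF this(1) spec[OF this(2), of a]]
  show "((\<lambda>t. s (y + t *s axis i 1) * u (y + t *s axis i 1) $ a) has_field_derivative d * u y $ a + s y * u' $ a) (at 0)"
    by (simp add: mult.commute)
qed

lemma hasd_mv: "hasdm i A y A' \<Longrightarrow> hasd i u y u' \<Longrightarrow>
    hasd i (\<lambda>z. A z *v u z) y (A' *v u y + A y *v u')"
  unfolding hasd_def hasdm_def matrix_vector_mult_def vec_lambda_beta vector_add_component
proof (intro allI)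
  fix a assume A: "\<forall>a c. ((\<lambda>t. A (y + t *s axis i 1) $ a $ c) has_field_derivative A' $ a $ c) (at 0)"
    and u: "\<forall>a. ((\<lambda>t. u (y + t *s axis i 1) $ a) has_field_derivative u' $ a) (at 0)"
  have "((\<lambda>t. \<Sum>c\<in>UNIV. A (y + t *s axis i 1) $ a $ c * u (y + t *s axis i 1) $ c) has_field_derivative
      (\<Sum>c\<in>UNIV. A' $ a $ c * u y $ c + A y $ a $ c * u' $ c)) (at 0)"
  proof (rule DERIV_sum)
    fix c
    from DERIV_mult[OF spec[OF spec[OF A, of a], of c] spec[OF u, of c]]
    show "((\<lambda>t. A (y + t *s axis i 1) $ a $ c * u (y + t *s axis i 1) $ c) has_field_derivative
      A' $ a $ c * u y $ c + A y $ a $ c * u' $ c) (at 0)" by (simp add: mult.commute)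
  qed
  then show "((\<lambda>t. \<Sum>c\<in>UNIV. A (y + t *s axis i 1) $ a $ c * u (y + t *s axis i 1) $ c) has_field_derivative
      (\<Sum>c\<in>UNIV. A' $ a $ c * u y $ c) + (\<Sum>c\<in>UNIV. A y $ a $ c * u' $ c)) (at 0)"
    by (simp add: sum.distrib)
qed

lemma hasd_cmv: "hasd i u y u' \<Longrightarrow> hasd i (\<lambda>z. C *v u z) y (C *v u')"
proof -
  assume "hasd i u y u'"
  moreover have "hasdm i (\<lambda>z. C) y 0" unfolding hasdm_def by simp
  ultimately show ?thesis using hasd_mv[of i "\<lambda>z. C" y 0 u u'] by simp
qed

lemma hasds_coord_same: "hasds i (\<lambda>z. z $ i) y 1"
proof -
  have "(\<lambda>t. (y + t *s axis i 1) $ i) = (\<lambda>t. y$i + t)" by (simp add: axis_def)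
  then show ?thesis unfolding hasds_def by (auto intro!: derivative_eq_intros)
qed

lemma hasds_coord_other: "j \<noteq> i \<Longrightarrow> hasds i (\<lambda>z. z $ j) y 0"
  unfolding hasds_def by (simp add: axis_def)

lemma hasd_cong_ev: "(\<forall>\<^sub>F t in nhds 0. f (y + t *s axis i 1) = g (y + t *s axis i 1)) \<Longrightarrow>
    hasd i f y v \<Longrightarrow> hasd i g y v"
  unfolding hasd_def
proof (intro allI)
  fix a assume ev: "\<forall>\<^sub>F t in nhds 0. f (y + t *s axis i 1) = g (y + t *s axis i 1)"
    and h: "\<forall>a. ((\<lambda>t. f (y + t *s axis i 1) $ a) has_field_derivative v $ a) (at 0)"
  have e: "\<forall>\<^sub>F t in nhds 0. f (y + t *s axis i 1) $ a = g (y + t *s axis i 1) $ a"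
    using ev by eventually_elim simp
  show "((\<lambda>t. g (y + t *s axis i 1) $ a) has_field_derivative v $ a) (at 0)"
    using DERIV_cong_ev[OF refl e refl] spec[OF h, of a] by simp
qed

lemma bl_line: "bounded_linear (\<lambda>t::complex. t *s (v::complex^'n))"
proof -
  have "linear (\<lambda>t::complex. t *s v)"
  proof (rule linearI)
    show "(b1 + b2) *s v = b1 *s v + b2 *s v" for b1 b2 :: complex by (simp add: vec_eq_iff algebra_simps)
    show "(r *\<^sub>R b) *s v = r *\<^sub>R (b *s v)" for r and b :: complex
      by (simp add: vec_eq_iff)
  qed
  then show ?thesis using linear_conv_bounded_linear by blast
qed

lemma line_has_derivative: "((\<lambda>t. y + t *s v) has_derivative (\<lambda>t. t *s (v::complex^'n))) (at t0)"
proof -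
  have "((\<lambda>t. t *s v) has_derivative (\<lambda>t. t *s v)) (at t0)"
    by (rule bounded_linear.has_derivative[OF bl_line has_derivative_ident])
  from has_derivative_add[OF has_derivative_const this] show ?thesis by simp
qed

lemma holo_line:
  assumes "holo g S" "y \<in> S"
  shows "\<exists>d. ((\<lambda>t. g (y + t *s axis i 1)) has_field_derivative d) (at 0)"
proof -
  obtain D where D: "(g has_derivative D) (at y)" and lin: "\<And>c v. D (c *s v) = c * D v"
    using assms unfolding holo_def by blast
  have "((g \<circ> (\<lambda>t. y + t *s axis i 1)) has_derivative (D \<circ> (\<lambda>t. t *s axis i 1))) (at 0)"
    by (rule diff_chain_at[OF line_has_derivative]) (simp add: D)
  moreover have "(D \<circ> (\<lambda>t. t *s axis i 1)) = (*) (D (axis i 1))"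
    by (auto simp: lin)
  ultimately have "((\<lambda>t. g (y + t *s axis i 1)) has_derivative (*) (D (axis i 1))) (at 0)"
    by (simp add: o_def)
  then show ?thesis unfolding has_field_derivative_def by blast
qed

definition lineholo :: "'n::finite \<Rightarrow> (complex^'n \<Rightarrow> complex^'k) \<Rightarrow> (complex^'n) set \<Rightarrow> bool" where
  "lineholo i g S \<longleftrightarrow> (\<forall>y\<in>S. \<forall>a. \<exists>d. ((\<lambda>t. g (y + t *s axis i 1) $ a) has_field_derivative d) (at 0))"

lemma holo_vec_lineholo: "holo_vec f S \<Longrightarrow> lineholo i f S"
  unfolding holo_vec_def lineholo_def
proof (intro ballI allI)
  fix y a assume "\<forall>a. holo (\<lambda>x. f x $ a) S" "y \<in> S"
  then show "\<exists>d. ((\<lambda>t. f (y + t *s axis i 1) $ a) has_field_derivative d) (at 0)"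
    using holo_line[of "\<lambda>x. f x $ a" S y i] by simp
qed

lemma lineholo_hasd: "lineholo i g S \<Longrightarrow> y \<in> S \<Longrightarrow> hasd i g y (pd i g y)"
  unfolding lineholo_def hasd_def pd_def
proof (intro allI)
  fix a assume "\<forall>y\<in>S. \<forall>a. \<exists>d. ((\<lambda>t. g (y + t *s axis i 1) $ a) has_field_derivative d) (at 0)" "y \<in> S"
  then obtain d where d: "((\<lambda>t. g (y + t *s axis i 1) $ a) has_field_derivative d) (at 0)" by blast
  then show "((\<lambda>t. g (y + t *s axis i 1) $ a) has_field_derivative
      (\<chi> a. deriv (\<lambda>t. g (y + t *s axis i 1) $ a) 0) $ a) (at 0)"
    by (simp add: DERIV_imp_deriv)
qed

lemma lineholo_hasdm: "holo_mat F S \<Longrightarrow> y \<in> S \<Longrightarrow> hasdm i F y (pdm i F y)"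
proof -
  assume h: "holo_mat F S" "y \<in> S"
  have ex: "\<exists>d. ((\<lambda>t. F (y + t *s axis i 1) $ a $ c) has_field_derivative d) (at 0)" for a c
    using holo_line[of "\<lambda>x. F x $ a $ c" S y i] h unfolding holo_mat_def by blast
  show ?thesis unfolding hasdm_def pdm_def
  proof (intro allI)
    fix a c
    obtain d where "((\<lambda>t. F (y + t *s axis i 1) $ a $ c) has_field_derivative d) (at 0)" using ex by blast
    then show "((\<lambda>t. F (y + t *s axis i 1) $ a $ c) has_field_derivative
      (\<chi> a c. deriv (\<lambda>t. F (y + t *s axis i 1) $ a $ c) 0) $ a $ c) (at 0)"
      by (simp add: DERIV_imp_deriv)
  qed
qed

lemma open_line_preimage: "open S \<Longrightarrow> open {t::complex. y + t *s (v::complex^'n) \<in> S}"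
proof -
  assume "open S"
  have "continuous_on UNIV (\<lambda>t::complex. y + t *s v)"
    by (intro continuous_at_imp_continuous_on ballI has_derivative_continuous[OF line_has_derivative])
  then show ?thesis using \<open>open S\<close> open_vimage[of S "\<lambda>t::complex. y + t *s v"]
    by (simp add: vimage_def)
qed

lemma lineholo_pd:
  assumes lh: "lineholo i g S" and S: "open S"
  shows "lineholo i (pd i g) S"
  unfolding lineholo_def
proof (intro ballI allI)
  fix y a assume y: "y \<in> S"
  define F where "F = (\<lambda>t. g (y + t *s axis i 1) $ a)"
  define T where "T = {t. y + t *s axis i 1 \<in> S}"
  have T: "open T" unfolding T_def by (rule open_line_preimage[OF S])
  have 0: "0 \<in> T" using y by (simp add: T_def)
  have dF: "(F has_field_derivative pd i g (y + t *s axis i 1) $ a) (at t)" if "t \<in> T" for t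
  proof -
    have "y + t *s axis i 1 \<in> S" using that by (simp add: T_def)
    then have hd: "hasd i g (y + t *s axis i 1) (pd i g (y + t *s axis i 1))"
      using lineholo_hasd[OF lh] by blast
    have eq: "(\<lambda>s. F (s + t)) = (\<lambda>s. g ((y + t *s axis i 1) + s *s axis i 1) $ a)"
      by (rule ext) (simp add: F_def vector_sadd_rdistrib add_ac)
    have "((\<lambda>s. F (s + t)) has_field_derivative pd i g (y + t *s axis i 1) $ a) (at 0)"
      unfolding eq using hd unfolding hasd_def by blast
    then show ?thesis using DERIV_shift[of F _ 0 t] by simp
  qed
  then have hol: "F holomorphic_on T"
    unfolding holomorphic_on_open[OF T] by blast
  then have "deriv F holomorphic_on T" using holomorphic_deriv T by blast
  then have d2: "(deriv F has_field_derivative deriv (deriv F) 0) (at 0)"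
    using T 0 holomorphic_derivI by blast
  have e: "\<forall>\<^sub>F t in nhds 0. pd i g (y + t *s axis i 1) $ a = deriv F t"
    using eventually_nhds_in_open[OF T 0] by eventually_elim (rule DERIV_imp_deriv[OF dF, symmetric])
  have "((\<lambda>t. pd i g (y + t *s axis i 1) $ a) has_field_derivative deriv (deriv F) 0) (at 0)"
    using DERIV_cong_ev[OF refl e refl] d2 by simp
  then show "\<exists>d. ((\<lambda>t. pd i g (y + t *s axis i 1) $ a) has_field_derivative d) (at 0)" by blast
qed

lemma det_cont:
  assumes "\<And>i j. isCont (\<lambda>t. B t $ i $ j) t0"
  shows "isCont (\<lambda>t. det (B t :: complex^'k^'k)) t0"
  unfolding det_def
proof (rule continuous_sum)
  fix p
  have "isCont (\<lambda>t. \<Prod>i\<in>UNIV. B t $ i $ p i) t0"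
    by (rule continuous_prod) (rule assms)
  then show "isCont (\<lambda>t. of_int (sign p) * (\<Prod>i\<in>UNIV. B t $ i $ p i)) t0"
    by (rule continuous_mult[OF continuous_const])
qed

lemma inv_cont:
  fixes A :: "complex \<Rightarrow> complex^'k^'k" and u :: "complex \<Rightarrow> complex^'k"
  assumes cA: "\<And>a c. isCont (\<lambda>t. A t $ a $ c) 0" and cu: "\<And>a. isCont (\<lambda>t. u t $ a) 0"
    and inv: "\<forall>\<^sub>F t in nhds 0. invertible (A t)"
  shows "isCont (\<lambda>t. (matrix_inv (A t) *v u t) $ k) 0"
proof -
  define C where "C t = det (\<chi> i j. if j = k then u t $ i else A t $ i $ j)" for t
  have eq: "\<forall>\<^sub>F t in nhds 0. C t / det (A t) = (matrix_inv (A t) *v u t) $ k"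
    using inv
  proof eventually_elim
    case (elim t)
    have d: "det (A t) \<noteq> 0" using elim invertible_det_nz by blast
    have "A t *v (matrix_inv (A t) *v u t) = u t" using inv_mv_cancel1[OF elim] .
    then have "matrix_inv (A t) *v u t = (\<chi> k. det(\<chi> i j. if j=k then u t $i else A t $i$j) / det (A t))"
      using cramer[OF d] by blast
    then show ?case by (simp add: C_def)
  qed
  have d0: "det (A 0) \<noteq> 0" using inv invertible_det_nz eventually_nhds_x_imp_x by blast
  have cC: "isCont C 0" unfolding C_def
    by (rule det_cont) (case_tac "j = k", simp_all add: cA cu)
  have cD: "isCont (\<lambda>t. det (A t)) 0" by (rule det_cont) (rule cA)
  have "isCont (\<lambda>t. C t / det (A t)) 0" using cC cD d0 by (intro continuous_intros)
  then show ?thesis using isCont_cong[OF eq] by simp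
qed

lemma aux_div: "(x - y) * z / h = (x / h - y / h) * (z::complex)"
  by (simp add: diff_divide_distrib[symmetric])

lemma inv_deriv:
  fixes A :: "complex \<Rightarrow> complex^'k^'k" and u :: "complex \<Rightarrow> complex^'k"
  assumes dA: "\<And>a c. ((\<lambda>t. A t $ a $ c) has_field_derivative A' $ a $ c) (at 0)"
    and du: "\<And>a. ((\<lambda>t. u t $ a) has_field_derivative u' $ a) (at 0)"
    and inv: "\<forall>\<^sub>F t in nhds 0. invertible (A t)"
  shows "((\<lambda>t. (matrix_inv (A t) *v u t) $ k) has_field_derivative
           (matrix_inv (A 0) *v (u' - A' *v (matrix_inv (A 0) *v u 0))) $ k) (at 0)"
proof -
  define g where "g t = matrix_inv (A t) *v u t" for t
  define B where "B = matrix_inv (A 0)"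
  have i0: "invertible (A 0)" using inv eventually_nhds_x_imp_x by blast
  have cg: "isCont (\<lambda>t. g t $ c) 0" for c unfolding g_def
    by (rule inv_cont[OF _ _ inv]) (use dA du DERIV_isCont in blast)+
  have key: "g t - g 0 = B *v (u t - u 0 - (A t - A 0) *v g t)" if it: "invertible (A t)" for t
  proof -
    have "u t - u 0 - (A t - A 0) *v g t = A 0 *v g t - u 0"
      using inv_mv_cancel1[OF it] by (simp add: g_def mv_mdiff)
    also have "\<dots> = A 0 *v (g t - g 0)"
      using inv_mv_cancel1[OF i0] by (simp add: g_def mv_diff)
    finally show ?thesis using inv_mv_cancel2[OF i0] by (simp add: B_def)
  qed
  define E where "E h = (\<Sum>a\<in>UNIV. B $ k $ a * ((u h $ a - u 0 $ a) / h
       - (\<Sum>c\<in>UNIV. (A h $ a $ c - A 0 $ a $ c) / h * g h $ c)))" for h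
  have ev: "\<forall>\<^sub>F h in at 0. E h = (g h $ k - g 0 $ k) / (h - 0)"
  proof -
    have "\<forall>\<^sub>F h in at 0. invertible (A h)" using inv eventually_nhds_conv_at by blast
    then show ?thesis
    proof eventually_elim
      case (elim h)
      have "g h $ k - g 0 $ k = (B *v (u h - u 0 - (A h - A 0) *v g h)) $ k"
        using key[OF elim] by (metis vector_minus_component)
      also have "\<dots> = (\<Sum>a\<in>UNIV. B $ k $ a * ((u h $ a - u 0 $ a)
           - (\<Sum>c\<in>UNIV. (A h $ a $ c - A 0 $ a $ c) * g h $ c)))"
        by (simp add: matrix_vector_mult_def)
      finally have "(g h $ k - g 0 $ k) / (h - 0) = (\<Sum>a\<in>UNIV. B $ k $ a * ((u h $ a - u 0 $ a)
           - (\<Sum>c\<in>UNIV. (A h $ a $ c - A 0 $ a $ c) * g h $ c))) / h" by simp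
      also have "\<dots> = (\<Sum>a\<in>UNIV. B $ k $ a * (((u h $ a - u 0 $ a)
           - (\<Sum>c\<in>UNIV. (A h $ a $ c - A 0 $ a $ c) * g h $ c)) / h))"
        by (simp only: sum_divide_distrib times_divide_eq_right)
      also have "\<dots> = E h" unfolding E_def
        by (simp only: diff_divide_distrib sum_divide_distrib aux_div)
      finally show ?case ..
    qed
  qed
  have tu: "((\<lambda>h. (u h $ a - u 0 $ a) / h) \<longlongrightarrow> u' $ a) (at 0)" for a
    using du[of a] unfolding has_field_derivative_iff by simp
  have tA: "((\<lambda>h. (A h $ a $ c - A 0 $ a $ c) / h) \<longlongrightarrow> A' $ a $ c) (at 0)" for a c
    using dA[of a c] unfolding has_field_derivative_iff by simp
  have tg: "((\<lambda>h. g h $ c) \<longlongrightarrow> g 0 $ c) (at 0)" for c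
    using cg[of c] by (simp add: isCont_def)
  have "(E \<longlongrightarrow> (\<Sum>a\<in>UNIV. B $ k $ a * (u' $ a - (\<Sum>c\<in>UNIV. A' $ a $ c * g 0 $ c)))) (at 0)"
    unfolding E_def by (intro tendsto_intros tu tA tg)
  then have "((\<lambda>h. (g h $ k - g 0 $ k) / (h - 0)) \<longlongrightarrow>
      (\<Sum>a\<in>UNIV. B $ k $ a * (u' $ a - (\<Sum>c\<in>UNIV. A' $ a $ c * g 0 $ c)))) (at 0)"
    using tendsto_cong[OF ev] by simp
  moreover have "(\<Sum>a\<in>UNIV. B $ k $ a * (u' $ a - (\<Sum>c\<in>UNIV. A' $ a $ c * g 0 $ c)))
      = (matrix_inv (A 0) *v (u' - A' *v (matrix_inv (A 0) *v u 0))) $ k"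
    by (simp add: B_def g_def matrix_vector_mult_def)
  ultimately show ?thesis unfolding has_field_derivative_iff g_def by simp
qed

locale setting =
  fixes rho :: "('n::{finite,linorder} \<Rightarrow> 'n::{finite,linorder}) \<Rightarrow> complex^'k::finite^'k"
    and \<kappa> :: real and \<Omega> :: "(complex^'n::{finite,linorder}) set"
    and L :: "complex^'n::{finite,linorder} \<Rightarrow> complex^'k::finite^'k"
    and M :: "('n::{finite,linorder} \<Rightarrow> 'n::{finite,linorder}) \<Rightarrow> complex^'n::{finite,linorder} \<Rightarrow> complex^'k::finite^'k"
    and gam :: real
  assumes \<Omega>_open: "open \<Omega>"
    and \<Omega>_reg: "\<Omega> \<subseteq> regular"
    and \<Omega>_inv: "\<And>w. w permutes UNIV \<Longrightarrow> (\<lambda>y. act y w) ` \<Omega> = \<Omega>"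
    and L_holo: "holo_mat L \<Omega>"
    and L_inv: "\<And>y. y \<in> \<Omega> \<Longrightarrow> invertible (L y)"
    and L_pde: "\<And>y i. y \<in> \<Omega> \<Longrightarrow>
       pdm i L y = \<kappa> *\<^sub>R (L y **
         ((\<Sum>j\<in>UNIV - {i}. mat (1 / (y $ i - y $ j)) ** rho (Transposition.transpose i j))
          - mat (complex_of_real gam / y $ i)))"
    and M_lc: "\<And>w y. w permutes UNIV \<Longrightarrow> y \<in> \<Omega> \<Longrightarrow>
       \<exists>e>0. \<forall>z\<in>\<Omega>. dist z y < e \<longrightarrow> M w z = M w y"
    and M_GL: "\<And>w y. w permutes UNIV \<Longrightarrow> y \<in> \<Omega> \<Longrightarrow> invertible (M w y)"
    and M_id: "\<And>y. y \<in> \<Omega> \<Longrightarrow> M id y = mat 1"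
    and M_cocycle: "\<And>w1 w2 y. w1 permutes UNIV \<Longrightarrow> w2 permutes UNIV \<Longrightarrow> y \<in> \<Omega> \<Longrightarrow>
       M (w1 \<circ> w2) y = M w2 (act y w1) ** M w1 y"
    and L_equiv: "\<And>w y. w permutes UNIV \<Longrightarrow> y \<in> \<Omega> \<Longrightarrow>
       L (act y w) = M w y ** L y ** rho w"
begin

lemma act_in: "y \<in> \<Omega> \<Longrightarrow> w permutes UNIV \<Longrightarrow> act y w \<in> \<Omega>"
  using \<Omega>_inv by blast

lemma tr_perm: "Transposition.transpose i j permutes UNIV"
  by (rule permutes_swap_id) auto

lemma reg_nz: "y \<in> \<Omega> \<Longrightarrow> y $ i \<noteq> 0"
  using \<Omega>_reg unfolding regular_def by blast

lemma reg_ne: "y \<in> \<Omega> \<Longrightarrow> i \<noteq> j \<Longrightarrow> y $ i \<noteq> y $ j"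
  using \<Omega>_reg unfolding regular_def by blast

lemma line_cont: "isCont (\<lambda>t. y + t *s (v::complex^'m)) t0"
  by (rule has_derivative_continuous[OF line_has_derivative])

lemma line_ev: "y \<in> \<Omega> \<Longrightarrow> \<forall>\<^sub>F t in nhds 0. y + t *s axis i 1 \<in> \<Omega>"
proof -
  assume y: "y \<in> \<Omega>"
  have "open {t::complex. y + t *s axis i 1 \<in> \<Omega>}" by (rule open_line_preimage[OF \<Omega>_open])
  moreover have "0 \<in> {t::complex. y + t *s axis i 1 \<in> \<Omega>}" using y by simp
  ultimately show ?thesis using eventually_nhds_in_open by fastforce
qed

lemma M_ev: "y \<in> \<Omega> \<Longrightarrow> w permutes UNIV \<Longrightarrow> \<forall>\<^sub>F t in nhds 0. M w (y + t *s axis i 1) = M w y"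
proof -
  assume y: "y \<in> \<Omega>" and w: "w permutes UNIV"
  obtain e where e: "e > 0" "\<And>z. z \<in> \<Omega> \<Longrightarrow> dist z y < e \<Longrightarrow> M w z = M w y"
    using M_lc[OF w y] by blast
  have "open {t::complex. y + t *s axis i 1 \<in> \<Omega> \<inter> ball y e}"
    by (rule open_line_preimage) (simp add: open_Int \<Omega>_open)
  moreover have "0 \<in> {t::complex. y + t *s axis i 1 \<in> \<Omega> \<inter> ball y e}" using y e(1) by simp
  ultimately have "\<forall>\<^sub>F t in nhds 0. y + t *s axis i 1 \<in> \<Omega> \<inter> ball y e"
    using eventually_nhds_in_open by fastforce
  then show ?thesis
    by eventually_elim (use e(2) in \<open>auto simp: dist_commute\<close>)
qed

lemma act_line: "act (y + t *s axis i 1) (Transposition.transpose i j) = act y (Transposition.transpose i j) + t *s axis j 1"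
  by (simp add: act_def vec_eq_iff axis_def Transposition.transpose_def)

lemma Linv_hasd:
  assumes y: "y \<in> \<Omega>" and h: "hasd i \<phi> y \<phi>'"
  shows "hasd i (\<lambda>z. matrix_inv (L z) *v \<phi> z) y
     (matrix_inv (L y) *v (\<phi>' - pdm i L y *v (matrix_inv (L y) *v \<phi> y)))"
proof -
  have dA: "((\<lambda>t. L (y + t *s axis i 1) $ a $ c) has_field_derivative pdm i L y $ a $ c) (at 0)" for a c
    using lineholo_hasdm[OF L_holo y, of i] unfolding hasdm_def by blast
  have du: "((\<lambda>t. \<phi> (y + t *s axis i 1) $ a) has_field_derivative \<phi>' $ a) (at 0)" for a
    using h unfolding hasd_def by blast
  have inv: "\<forall>\<^sub>F t in nhds 0. invertible (L (y + t *s axis i 1))"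
    using line_ev[OF y, of i] by eventually_elim (rule L_inv)
  show ?thesis unfolding hasd_def
    using inv_deriv[of "\<lambda>t. L (y + t *s axis i 1)" "pdm i L y" "\<lambda>t. \<phi> (y + t *s axis i 1)" \<phi>', OF dA du inv]
    by simp
qed

lemma sigma_hasd:
  assumes y: "y \<in> \<Omega>" and h: "hasd j \<phi> (act y (Transposition.transpose i j)) \<phi>'"
  shows "hasd i (sigmaM M (Transposition.transpose i j) \<phi>) y
     (matrix_inv (M (Transposition.transpose i j) y) *v \<phi>')"
proof -
  let ?t = "Transposition.transpose i j"
  have h2: "hasd i (\<lambda>z. matrix_inv (M ?t y) *v \<phi> (act z ?t)) y (matrix_inv (M ?t y) *v \<phi>')"
  proof (rule hasd_cmv)
    show "hasd i (\<lambda>z. \<phi> (act z ?t)) y \<phi>'"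
      using h unfolding hasd_def act_line by simp
  qed
  show ?thesis
  proof (rule hasd_cong_ev[OF _ h2])
    show "\<forall>\<^sub>F t in nhds 0. matrix_inv (M ?t y) *v \<phi> (act (y + t *s axis i 1) ?t) =
        sigmaM M ?t \<phi> (y + t *s axis i 1)"
      using M_ev[OF y tr_perm, of i j i] by eventually_elim (simp add: sigmaM_def)
  qed
qed

end

definition cc :: "'n::{finite,linorder} \<Rightarrow> 'n::{finite,linorder} \<Rightarrow> complex^'n::{finite,linorder} \<Rightarrow> complex" where
  "cc i j y = (if i < j then 1 else 0) - y $ i / (y $ i - y $ j)"

lemma mat_mv: "mat c *v (v::'a::comm_ring_1^'n) = c *s v"
  by (simp add: vec_eq_iff matrix_vector_mult_def mat_def ite_mult cong: if_cong)

lemma act_tr_i: "act y (Transposition.transpose i j) $ i = y $ j"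
  by (simp add: act_def)

lemma t_alg:
  fixes a b c c' k P S :: complex
  assumes d: "a - b \<noteq> 0" and c: "c + c' = 1"
  shows "k*a*P/(a-b) - k*b*S/(a-b) - c*(k*S) - a*k*(P/(a-b)) = k*((c' - a/(a-b))*S)"
proof -
  have h: "a/(a-b) = 1 + b/(a-b)" using d by (simp add: field_simps)
  have c': "c' = 1 - c" using c by (simp add: algebra_simps)
  show ?thesis unfolding h c' by (simp add: algebra_simps)
qed

lemma key1_alg:
  fixes y :: "complex^'n::{finite,linorder}" and P S :: "'n \<Rightarrow> complex" and k :: complex
  assumes ne: "\<And>x. x \<noteq> i \<Longrightarrow> y $ i \<noteq> y $ x"
  shows "(\<Sum>x\<in>UNIV - {i}. k * y $ i * P x / (y $ i - y $ x) - k * y $ x * S x / (y $ i - y $ x)) -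
      (\<Sum>x\<in>{j. j < i}. k * S x) - y $ i * k * (\<Sum>x\<in>UNIV - {i}. P x / (y $ i - y $ x))
    = k * (\<Sum>x\<in>UNIV - {i}. cc i x y * S x)"
proof -
  have e1: "{j. j < i} = {x \<in> UNIV - {i}. x < i}" by auto
  have s1: "(\<Sum>x\<in>{j. j < i}. k * S x) = (\<Sum>x\<in>UNIV - {i}. if x < i then k * S x else 0)"
    unfolding e1 by (rule sum.inter_filter) simp
  have t: "k * y $ i * P x / (y $ i - y $ x) - k * y $ x * S x / (y $ i - y $ x)
      - (if x < i then k * S x else 0) - y $ i * k * (P x / (y $ i - y $ x)) = k * (cc i x y * S x)"
    if x: "x \<in> UNIV - {i}" for x
  proof -
    have d: "y $ i - y $ x \<noteq> 0" using ne x by auto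
    show ?thesis
    proof (cases "x < i")
      case True
      then have "\<not> i < x" by auto
      then show ?thesis unfolding cc_def using True t_alg[OF d, of 1 0 k "P x" "S x"] by simp
    next
      case False
      then have "i < x" using x by auto
      then show ?thesis unfolding cc_def using False t_alg[OF d, of 0 1 k "P x" "S x"] by simp
    qed
  qed
  show ?thesis
    unfolding s1 sum_distrib_left
    apply (simp only: sum_subtractf[symmetric])
    apply (rule sum.cong[OF refl])
    apply (erule t)
    done
qed

context setting begin

lemma Lrho:
  assumes y: "y \<in> \<Omega>"
  shows "L y *v (rho (Transposition.transpose i j) *v (matrix_inv (L (act y (Transposition.transpose i j))) *v v))
     = matrix_inv (M (Transposition.transpose i j) y) *v v"
proof -
  let ?t = "Transposition.transpose i j"
  have yt: "act y ?t \<in> \<Omega>" by (rule act_in[OF y tr_perm])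
  have "L (act y ?t) *v (matrix_inv (L (act y ?t)) *v v) = v" by (rule inv_mv_cancel1[OF L_inv[OF yt]])
  then have "M ?t y *v (L y *v (rho ?t *v (matrix_inv (L (act y ?t)) *v v))) = v"
    unfolding L_equiv[OF tr_perm y] by (simp only: matmat_mv)
  then show ?thesis using inv_mv_eq[OF M_GL[OF tr_perm y]] by blast
qed

lemma key1:
  assumes y: "y \<in> \<Omega>" and h: "hasd i \<phi> y \<phi>'"
  shows "L y *v (Uop \<kappa> rho i (\<lambda>z. matrix_inv (L z) *v \<phi> z) y
            - (1 + complex_of_real (\<kappa> * gam)) *s (matrix_inv (L y) *v \<phi> y))
       = (y $ i) *s \<phi>' + complex_of_real \<kappa> *s
           (\<Sum>j\<in>UNIV - {i}. cc i j y *s sigmaM M (Transposition.transpose i j) \<phi> y)"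
proof -
  define g where "g z = matrix_inv (L z) *v \<phi> z" for z
  define L' where "L' = pdm i L y"
  define g' where "g' = matrix_inv (L y) *v (\<phi>' - L' *v g y)"
  define P where "P j = L y *v (rho (Transposition.transpose i j) *v g y)" for j
  define S where "S j = sigmaM M (Transposition.transpose i j) \<phi> y" for j
  have hg: "hasd i g y g'" unfolding g_def g'_def L'_def
    using Linv_hasd[OF y h] by simp
  have "hasd i (\<lambda>z. z $ i *s g z) y (1 *s g y + y $ i *s g')"
    by (rule hasd_scal[OF hasds_coord_same hg])
  then have pdG: "pd i (\<lambda>z. z $ i *s g z) y = g y + y $ i *s g'"
    using hasd_pd by fastforce
  have F1: "L y *v g y = \<phi> y" unfolding g_def by (rule inv_mv_cancel1[OF L_inv[OF y]])
  have F2: "L y *v g' = \<phi>' - L' *v g y" unfolding g'_def by (rule inv_mv_cancel1[OF L_inv[OF y]])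
  have F3: "L' *v g y = complex_of_real \<kappa> *s
      ((\<Sum>j\<in>UNIV - {i}. (1 / (y $ i - y $ j)) *s P j) - (complex_of_real gam / y $ i) *s \<phi> y)"
    unfolding L'_def L_pde[OF y] scaleR_mv matmat_mv mv_mdiff mv_sum mat_mult_mv mat_mv
    by (simp add: P_def mv_vsum mv_diff mv_scale F1)
  have F4: "L y *v (rho (Transposition.transpose i j) *v g (act y (Transposition.transpose i j))) = S j" for j
    unfolding g_def S_def sigmaM_def by (rule Lrho[OF y])
  have U: "L y *v Uop \<kappa> rho i g y =
      (\<phi> y + y $ i *s (\<phi>' - L' *v g y))
      + (\<Sum>j\<in>UNIV - {i}. (complex_of_real \<kappa> / (y $ i - y $ j)) *s (y $ i *s P j - y $ j *s S j))
      - (\<Sum>j\<in>{j. j < i}. complex_of_real \<kappa> *s S j)"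
    unfolding Uop_def Dop_def pdG
    by (simp add: mv_add mv_diff mv_vsum mv_scale F1 F2 F4 act_tr_i P_def)
  show ?thesis
    unfolding g_def[symmetric] mv_diff U mv_scale F1 F3
    using reg_nz[OF y, of i] reg_ne[OF y, of i]
    by (simp add: vec_eq_iff S_def[symmetric] key1_alg)
qed

end

lemma sum_minus_one: "sum F (UNIV - {i::'n::finite}) = (\<Sum>j\<in>UNIV. if j = i then 0 else F j)"
proof -
  have "(\<Sum>j\<in>UNIV. if j = i then 0 else F j) = sum F (UNIV \<inter> - {j. j = i})"
    by (simp add: sum.If_cases)
  then show ?thesis by (simp add: Compl_eq_Diff_UNIV)
qed

lemma sum_minus_gen: "finite A \<Longrightarrow> sum F (A - {j}) = (\<Sum>k\<in>A. if k = j then 0 else F k)"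
proof -
  assume A: "finite A"
  have "(\<Sum>k\<in>A. if k = j then 0 else F k) = sum F (A \<inter> - {k. k = j})"
    by (simp add: sum.If_cases A)
  then show ?thesis by (simp add: Diff_eq)
qed

lemma sum_filter_UNIV: "sum F {j. P j} = (\<Sum>j\<in>(UNIV::'n::finite set). if P j then F j else 0)"
  using sum.inter_filter[of "UNIV::'n set" F P] by simp

lemma GL1:
  fixes F :: "'n::finite \<Rightarrow> 'n \<Rightarrow> complex"
  assumes "\<And>i j. i \<noteq> j \<Longrightarrow> F j i = - F i j"
  shows "(\<Sum>i\<in>UNIV. \<Sum>j\<in>UNIV - {i}. F i j) = 0"
proof -
  define S where "S = (\<Sum>i\<in>UNIV. \<Sum>j\<in>UNIV. if j = i then 0 else F i j)"
  have "S = (\<Sum>j\<in>UNIV. \<Sum>i\<in>UNIV. if j = i then 0 else F i j)"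
    unfolding S_def by (rule sum.swap)
  also have "\<dots> = (\<Sum>j\<in>UNIV. \<Sum>i\<in>UNIV. - (if i = j then 0 else F j i))"
  proof (rule sum.cong[OF refl], rule sum.cong[OF refl])
    fix i j show "(if j = i then 0 else F i j) = - (if i = j then 0 else F j i)"
      using assms[of j i] by auto
  qed
  also have "\<dots> = - S" unfolding S_def by (simp add: sum_negf)
  finally have "S = 0" by simp
  then show ?thesis unfolding sum_minus_one S_def .
qed

lemma GL2:
  fixes G :: "'n::{finite,linorder} \<Rightarrow> 'n \<Rightarrow> complex"
  assumes "\<And>i j. i \<noteq> j \<Longrightarrow> G j i = G i j"
  shows "(\<Sum>i\<in>UNIV. \<Sum>j\<in>UNIV - {i}. G i j) = 2 * (\<Sum>i\<in>UNIV. \<Sum>j\<in>{j. i < j}. G i j)"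
proof -
  have "(\<Sum>i\<in>UNIV. \<Sum>j\<in>UNIV. if j = i then 0 else G i j)
     = (\<Sum>i\<in>UNIV. \<Sum>j\<in>UNIV. (if i < j then G i j else 0) + (if j < i then G i j else 0))"
    by (rule sum.cong[OF refl], rule sum.cong[OF refl]) auto
  also have "\<dots> = (\<Sum>i\<in>UNIV. \<Sum>j\<in>UNIV. if i < j then G i j else 0)
       + (\<Sum>i\<in>UNIV. \<Sum>j\<in>UNIV. if j < i then G i j else 0)"
    by (simp add: sum.distrib)
  also have "(\<Sum>i\<in>UNIV. \<Sum>j\<in>UNIV. if j < i then G i j else 0)
      = (\<Sum>j\<in>UNIV. \<Sum>i\<in>UNIV. if j < i then G i j else 0)" by (rule sum.swap)
  also have "\<dots> = (\<Sum>j\<in>UNIV. \<Sum>i\<in>UNIV. if j < i then G j i else 0)"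
  proof (rule sum.cong[OF refl], rule sum.cong[OF refl])
    fix i j show "(if j < i then G i j else 0) = (if j < i then G j i else 0)"
      using assms[of j i] by auto
  qed
  finally show ?thesis unfolding sum_minus_one sum_filter_UNIV by simp
qed

lemma rot3: "(\<Sum>i\<in>(UNIV::'n::finite set). \<Sum>j\<in>UNIV. \<Sum>k\<in>UNIV. X i j k) = (\<Sum>i\<in>UNIV. \<Sum>j\<in>UNIV. \<Sum>k\<in>UNIV. X k i j)"
proof -
  have "(\<Sum>i\<in>(UNIV::'n set). \<Sum>j\<in>UNIV. \<Sum>k\<in>UNIV. X i j k) = (\<Sum>j\<in>UNIV. \<Sum>i\<in>UNIV. \<Sum>k\<in>UNIV. X i j k)"
    by (rule sum.swap)
  also have "\<dots> = (\<Sum>j\<in>UNIV. \<Sum>k\<in>UNIV. \<Sum>i\<in>UNIV. X i j k)"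
    by (rule sum.cong[OF refl], rule sum.swap)
  finally show ?thesis .
qed

lemma GL3:
  fixes H :: "'n::finite \<Rightarrow> 'n \<Rightarrow> 'n \<Rightarrow> complex"
  assumes "\<And>i j k. i \<noteq> j \<Longrightarrow> i \<noteq> k \<Longrightarrow> j \<noteq> k \<Longrightarrow> H i j k + H j k i + H k i j = 0"
  shows "(\<Sum>i\<in>UNIV. \<Sum>j\<in>UNIV - {i}. \<Sum>k\<in>UNIV - {i} - {j}. H i j k) = 0"
proof -
  define X where "X i j k = (if i \<noteq> j \<and> i \<noteq> k \<and> j \<noteq> k then H i j k else 0)" for i j k
  define S where "S = (\<Sum>i\<in>UNIV. \<Sum>j\<in>UNIV. \<Sum>k\<in>UNIV. X i j k)"
  have S1: "S = (\<Sum>i\<in>UNIV. \<Sum>j\<in>UNIV. \<Sum>k\<in>UNIV. X k i j)" unfolding S_def by (rule rot3)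
  have S2: "S = (\<Sum>i\<in>UNIV. \<Sum>j\<in>UNIV. \<Sum>k\<in>UNIV. X j k i)"
    unfolding S1 by (rule rot3)
  have "3 * S = S + S + S" by simp
  also have "\<dots> = (\<Sum>i\<in>UNIV. \<Sum>j\<in>UNIV. \<Sum>k\<in>UNIV. X i j k) + (\<Sum>i\<in>UNIV. \<Sum>j\<in>UNIV. \<Sum>k\<in>UNIV. X j k i)
      + (\<Sum>i\<in>UNIV. \<Sum>j\<in>UNIV. \<Sum>k\<in>UNIV. X k i j)"
    by (simp only: S_def[symmetric] S1[symmetric] S2[symmetric])
  also have "\<dots> = (\<Sum>i\<in>UNIV. \<Sum>j\<in>UNIV. \<Sum>k\<in>UNIV. X i j k + X j k i + X k i j)"
    by (simp add: sum.distrib)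
  also have "\<dots> = 0"
  proof (intro sum.neutral ballI)
    fix i j k
    show "X i j k + X j k i + X k i j = 0"
    proof (cases "i \<noteq> j \<and> i \<noteq> k \<and> j \<noteq> k")
      case True then show ?thesis using assms[of i j k] by (auto simp: X_def)
    next
      case False then show ?thesis by (auto simp: X_def)
    qed
  qed
  finally have "S = 0" by simp
  moreover have "(\<Sum>j\<in>UNIV - {i}. \<Sum>k\<in>UNIV - {i} - {j}. H i j k) = (\<Sum>j\<in>UNIV. \<Sum>k\<in>UNIV. X i j k)" for i
  proof -
    have "(\<Sum>k\<in>UNIV - {i} - {j}. H i j k) = (\<Sum>k\<in>UNIV. X i j k)" if "j \<noteq> i" for j
    proof -
      have "(\<Sum>k\<in>UNIV - {i} - {j}. H i j k) = (\<Sum>k\<in>UNIV - {i}. if k = j then 0 else H i j k)"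
        by (rule sum_minus_gen) simp
      also have "\<dots> = (\<Sum>k\<in>UNIV. if k = i then 0 else if k = j then 0 else H i j k)"
        by (rule sum_minus_one)
      also have "\<dots> = (\<Sum>k\<in>UNIV. X i j k)"
        by (rule sum.cong[OF refl]) (use that in \<open>auto simp: X_def\<close>)
      finally show ?thesis .
    qed
    then have "(\<Sum>j\<in>UNIV - {i}. \<Sum>k\<in>UNIV - {i} - {j}. H i j k) = (\<Sum>j\<in>UNIV - {i}. \<Sum>k\<in>UNIV. X i j k)"
      by (rule sum.cong[OF refl]) auto
    also have "\<dots> = (\<Sum>j\<in>UNIV. \<Sum>k\<in>UNIV. X i j k)"
      by (rule sum.mono_neutral_left) (auto simp: X_def)
    finally show ?thesis .
  qed
  then have "(\<Sum>i\<in>UNIV. \<Sum>j\<in>UNIV - {i}. \<Sum>k\<in>UNIV - {i} - {j}. H i j k) = S"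
    unfolding S_def by simp
  ultimately show ?thesis by simp
qed

lemma cyc_id:
  fixes a b c :: complex
  assumes "a \<noteq> b" "b \<noteq> c" "c \<noteq> a"
  shows "(a/(a-b))*(b/(b-c)) + (b/(b-c))*(c/(c-a)) + (c/(c-a))*(a/(a-b))
       = a/(a-b) + b/(b-c) + c/(c-a) - 1"
proof -
  obtain u v w where uvw: "u = a - b" "v = b - c" "w = c - a" by blast
  have u: "u \<noteq> 0" and v: "v \<noteq> 0" and w: "w \<noteq> 0" using assms uvw by auto
  have "a * b * w + b * c * u + c * a * v = a * v * w + b * u * w + c * u * v - u * v * w"
    unfolding uvw by (simp add: algebra_simps)
  then show ?thesis unfolding uvw[symmetric] using u v w by (simp add: field_simps)
qed

lemma cc3_alg:
  fixes a b c :: complex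
  assumes d: "a \<noteq> b" "b \<noteq> c" "c \<noteq> a"
    and cons: "\<not> (\<not> P \<and> Q \<and> \<not> R)" "\<not> (P \<and> \<not> Q \<and> R)"
  shows "((if P then 1 else 0) - a/(a-b)) * ((if Q then 1 else 0) - b/(b-c))
       + ((if R then 1 else 0) - b/(b-c)) * ((if P then 0 else 1) - c/(c-a))
       + ((if Q then 0 else 1) - c/(c-a)) * ((if R then 0 else 1) - a/(a-b)) = 0"
proof -
  define A where "A = a/(a-b)"
  define B where "B = b/(b-c)"
  define C where "C = c/(c-a)"
  have k: "A*B + B*C + C*A = A + B + C - 1" unfolding A_def B_def C_def by (rule cyc_id[OF d])
  show ?thesis unfolding A_def[symmetric] B_def[symmetric] C_def[symmetric]
    using cons k by (cases P; cases Q; cases R) (simp_all add: algebra_simps)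
qed

abbreviation tr :: "'n \<Rightarrow> 'n \<Rightarrow> 'n \<Rightarrow> 'n" where "tr \<equiv> Transposition.transpose"

lemma act_tr_other: "k \<noteq> i \<Longrightarrow> k \<noteq> j \<Longrightarrow> act x (tr i j) $ k = x $ k"
  by (simp add: act_def)

lemma act_tr_j: "act x (tr i j) $ j = x $ i"
  by (simp add: act_def)

lemma cc_anti:
  assumes "i \<noteq> j" "x $ i \<noteq> x $ j"
  shows "cc j i x = - cc i j x"
proof -
  have d: "x $ i - x $ j \<noteq> 0" "x $ j - x $ i \<noteq> 0" using assms by auto
  obtain u where u: "u = x $ i - x $ j" by blast
  have u0: "u \<noteq> 0" using u d by simp
  have m: "x $ j - x $ i = - u" using u by simp
  have xi: "x $ i = x $ j + u" using u by simp
  have "x $ j / (x $ j - x $ i) + x $ i / (x $ i - x $ j) = 1"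
    unfolding m u[symmetric] unfolding xi using u0 by (simp add: field_simps)
  then show ?thesis unfolding cc_def using assms(1)
    by (cases "i < j") (auto simp: algebra_simps not_less_iff_gr_or_eq)
qed

lemma cc_sq:
  assumes "i \<noteq> j" "x $ i \<noteq> x $ j"
  shows "cc i j x * cc i j (act x (tr i j)) = - (x $ i * x $ j / (x $ i - x $ j)\<^sup>2)"
proof -
  have d: "x $ i - x $ j \<noteq> 0" "x $ j - x $ i \<noteq> 0" using assms by auto
  have a: "act x (tr i j) $ i = x $ j" "act x (tr i j) $ j = x $ i" by (simp_all add: act_def)
  obtain u where u: "u = x $ i - x $ j" by blast
  have u0: "u \<noteq> 0" using u d by simp
  have m: "x $ j - x $ i = - u" using u by simp
  have xi: "x $ i = x $ j + u" using u by simp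
  show ?thesis
  proof (cases "i < j")
    case True then show ?thesis unfolding cc_def a m u[symmetric] unfolding xi
      using u0 by (simp add: field_simps power2_eq_square)
  next
    case False then show ?thesis unfolding cc_def a m u[symmetric] unfolding xi
      using u0 by (simp add: field_simps power2_eq_square)
  qed
qed

lemma cc_other:
  assumes "k \<noteq> i" "k \<noteq> j"
  shows "cc i k (act x (tr i j)) = (if i < k then 1 else 0) - x $ j / (x $ j - x $ k)"
  unfolding cc_def using assms by (simp add: act_def)

lemma cc3:
  fixes x :: "complex^'n::{finite,linorder}"
  assumes ij: "i \<noteq> j" "i \<noteq> k" "j \<noteq> k"
    and ne: "\<And>a b. a \<noteq> b \<Longrightarrow> x $ a \<noteq> x $ b"
  shows "cc i j x * cc i k (act x (tr i j)) + cc j k x * cc j i (act x (tr j k))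
       + cc k i x * cc k j (act x (tr k i)) = 0"
proof -
  have e: "cc i j x = (if i < j then 1 else 0) - x$i/(x$i - x$j)"
          "cc j k x = (if j < k then 1 else 0) - x$j/(x$j - x$k)"
          "cc k i x = (if k < i then 1 else 0) - x$k/(x$k - x$i)" by (simp_all add: cc_def)
  have o: "cc i k (act x (tr i j)) = (if i < k then 1 else 0) - x$j/(x$j - x$k)"
          "cc j i (act x (tr j k)) = (if j < i then 1 else 0) - x$k/(x$k - x$i)"
          "cc k j (act x (tr k i)) = (if k < j then 1 else 0) - x$i/(x$i - x$j)"
    using ij by (simp_all add: cc_other)
  have c1: "(if j < i then 1 else 0) = (if i < j then 0 else (1::complex))"
    and c2: "(if k < i then 1 else 0) = (if i < k then 0 else (1::complex))"
    and c3: "(if k < j then 1 else 0) = (if j < k then 0 else (1::complex))"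
    using ij by (auto simp: not_less_iff_gr_or_eq)
  have cons: "\<not> (\<not> i < j \<and> i < k \<and> \<not> j < k)" "\<not> (i < j \<and> \<not> i < k \<and> j < k)"
    using ij by (auto simp: not_less_iff_gr_or_eq)
  have "((if i < j then 1 else 0) - x$i/(x$i-x$j)) * ((if i < k then 1 else 0) - x$j/(x$j-x$k))
       + ((if j < k then 1 else 0) - x$j/(x$j-x$k)) * ((if i < j then 0 else 1) - x$k/(x$k-x$i))
       + ((if i < k then 0 else 1) - x$k/(x$k-x$i)) * ((if j < k then 0 else 1) - x$i/(x$i-x$j)) = 0"
    by (rule cc3_alg[OF ne ne ne cons]) (use ij in auto)
  then show ?thesis unfolding e o c1 c2 c3 by (simp add: algebra_simps)
qed

lemma final_alg_c:
  fixes x :: "complex^'n::{finite,linorder}" and k fz :: complex and p :: "'n \<Rightarrow> complex"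
    and b d :: "'n \<Rightarrow> 'n \<Rightarrow> complex" and e :: "'n \<Rightarrow> 'n \<Rightarrow> 'n \<Rightarrow> complex"
  assumes ne: "\<And>a c. a \<noteq> c \<Longrightarrow> x $ a \<noteq> x $ c"
    and bsym: "\<And>i j. b j i = b i j"
    and ejj: "\<And>i j. i \<noteq> j \<Longrightarrow> e i j j = fz"
    and erot: "\<And>i j l. i \<noteq> j \<Longrightarrow> i \<noteq> l \<Longrightarrow> j \<noteq> l \<Longrightarrow> e j l i = e i j l"
  shows "(\<Sum>i\<in>UNIV. x $ i * (p i + k * (\<Sum>j\<in>UNIV - {i}. x $ j / (x $ i - x $ j)\<^sup>2 * b i j + cc i j x * d j i))
          + k * (\<Sum>j\<in>UNIV - {i}. cc i j x * (x $ j * d i j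
               + k * (\<Sum>l\<in>UNIV - {i}. cc i l (act x (tr i j)) * e i j l))))
      = (\<Sum>i\<in>UNIV. x $ i * p i) - 2 * k * (\<Sum>i\<in>UNIV. \<Sum>j\<in>{j. i < j}.
            x $ i * x $ j / (x $ i - x $ j)\<^sup>2 * (k * fz - b i j))"
proof -
  define q where "q i j = x $ i * x $ j / (x $ i - x $ j)\<^sup>2" for i j
  define F where "F i j = cc i j x * (x $ i * d j i + x $ j * d i j)" for i j
  define H where "H i j l = cc i j x * cc i l (act x (tr i j)) * e i j l" for i j l
  define Z where "Z i j = k * (q i j * b i j) + k * F i j - k * k * (q i j * fz)
      + k * k * (\<Sum>l\<in>UNIV - {i} - {j}. H i j l)" for i j
  have qsym: "q j i = q i j" for i j unfolding q_def by (simp add: power2_commute mult.commute)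
  have Z: "x $ i * (k * (x $ j / (x $ i - x $ j)\<^sup>2 * b i j + cc i j x * d j i))
      + k * (cc i j x * (x $ j * d i j + k * (\<Sum>l\<in>UNIV - {i}. cc i l (act x (tr i j)) * e i j l)))
      = Z i j" if j: "j \<in> UNIV - {i}" for i j
  proof -
    have ij: "i \<noteq> j" using j by simp
    have rem: "(\<Sum>l\<in>UNIV - {i}. cc i l (act x (tr i j)) * e i j l)
       = cc i j (act x (tr i j)) * fz + (\<Sum>l\<in>UNIV - {i} - {j}. cc i l (act x (tr i j)) * e i j l)"
      using sum.remove[of "UNIV - {i}" j "\<lambda>l. cc i l (act x (tr i j)) * e i j l"] j ejj[OF ij] by simp
    have sq: "cc i j x * cc i j (act x (tr i j)) = - q i j"
      unfolding q_def by (rule cc_sq[OF ij ne[OF ij]])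
    have xq: "x $ i * (x $ j / (x $ i - x $ j)\<^sup>2) = q i j" unfolding q_def by simp
    define T where "T = (\<Sum>l\<in>UNIV - {i} - {j}. cc i l (act x (tr i j)) * e i j l)"
    have hT: "cc i j x * (k * T) = k * (\<Sum>l\<in>UNIV - {i} - {j}. H i j l)"
      unfolding H_def T_def by (simp add: sum_distrib_left mult_ac)
    have "x $ i * (k * (x $ j / (x $ i - x $ j)\<^sup>2 * b i j + cc i j x * d j i))
      + k * (cc i j x * (x $ j * d i j + k * (cc i j (act x (tr i j)) * fz + T)))
      = k * ((x $ i * (x $ j / (x $ i - x $ j)\<^sup>2)) * b i j) + k * (cc i j x * (x $ i * d j i + x $ j * d i j))
        + k * k * ((cc i j x * cc i j (act x (tr i j))) * fz) + k * (cc i j x * (k * T))"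
      by (simp add: algebra_simps)
    also have "\<dots> = Z i j" unfolding xq sq hT Z_def F_def by (simp add: algebra_simps)
    finally show ?thesis unfolding rem T_def .
  qed
  have per_i: "x $ i * (p i + k * (\<Sum>j\<in>UNIV - {i}. x $ j / (x $ i - x $ j)\<^sup>2 * b i j + cc i j x * d j i))
          + k * (\<Sum>j\<in>UNIV - {i}. cc i j x * (x $ j * d i j
               + k * (\<Sum>l\<in>UNIV - {i}. cc i l (act x (tr i j)) * e i j l)))
      = x $ i * p i + (\<Sum>j\<in>UNIV - {i}. Z i j)" for i
  proof -
    have "x $ i * (p i + k * (\<Sum>j\<in>UNIV - {i}. x $ j / (x $ i - x $ j)\<^sup>2 * b i j + cc i j x * d j i))
          + k * (\<Sum>j\<in>UNIV - {i}. cc i j x * (x $ j * d i j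
               + k * (\<Sum>l\<in>UNIV - {i}. cc i l (act x (tr i j)) * e i j l)))
       = x $ i * p i + (\<Sum>j\<in>UNIV - {i}. x $ i * (k * (x $ j / (x $ i - x $ j)\<^sup>2 * b i j + cc i j x * d j i))
      + k * (cc i j x * (x $ j * d i j + k * (\<Sum>l\<in>UNIV - {i}. cc i l (act x (tr i j)) * e i j l))))"
      by (simp only: sum.distrib sum_distrib_left distrib_left add.assoc)
    also have "\<dots> = x $ i * p i + (\<Sum>j\<in>UNIV - {i}. Z i j)"
      by (rule arg_cong[where f="\<lambda>t. x $ i * p i + t"], rule sum.cong[OF refl], erule Z)
    finally show ?thesis .
  qed
  have sumZ: "(\<Sum>i\<in>UNIV. \<Sum>j\<in>UNIV - {i}. Z i j)
     = k * (\<Sum>i\<in>UNIV. \<Sum>j\<in>UNIV - {i}. q i j * b i j) + k * (\<Sum>i\<in>UNIV. \<Sum>j\<in>UNIV - {i}. F i j)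
       - k * k * (\<Sum>i\<in>UNIV. \<Sum>j\<in>UNIV - {i}. q i j * fz)
       + k * k * (\<Sum>i\<in>UNIV. \<Sum>j\<in>UNIV - {i}. \<Sum>l\<in>UNIV - {i} - {j}. H i j l)"
    unfolding Z_def by (simp only: sum.distrib sum_subtractf sum_distrib_left)
  have F0: "(\<Sum>i\<in>UNIV. \<Sum>j\<in>UNIV - {i}. F i j) = 0"
  proof (rule GL1)
    fix i j :: 'n assume ij: "i \<noteq> j"
    show "F j i = - F i j" unfolding F_def cc_anti[OF ij ne[OF ij]] by (simp add: algebra_simps)
  qed
  have H0: "(\<Sum>i\<in>UNIV. \<Sum>j\<in>UNIV - {i}. \<Sum>l\<in>UNIV - {i} - {j}. H i j l) = 0"
  proof (rule GL3)
    fix i j l :: 'n assume d: "i \<noteq> j" "i \<noteq> l" "j \<noteq> l"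
    have e1: "e j l i = e i j l" by (rule erot[OF d])
    have e2: "e l i j = e i j l" using erot[of j l i] d e1 by auto
    have "H i j l + H j l i + H l i j = (cc i j x * cc i l (act x (tr i j)) + cc j l x * cc j i (act x (tr j l))
       + cc l i x * cc l j (act x (tr l i))) * e i j l"
      unfolding H_def e1 e2 by (simp add: algebra_simps)
    also have "\<dots> = 0" using cc3[OF d ne] by simp
    finally show "H i j l + H j l i + H l i j = 0" .
  qed
  have Qb: "(\<Sum>i\<in>UNIV. \<Sum>j\<in>UNIV - {i}. q i j * b i j) = 2 * (\<Sum>i\<in>UNIV. \<Sum>j\<in>{j. i < j}. q i j * b i j)"
    by (rule GL2) (simp add: qsym bsym)
  have Qf: "(\<Sum>i\<in>UNIV. \<Sum>j\<in>UNIV - {i}. q i j * fz) = 2 * (\<Sum>i\<in>UNIV. \<Sum>j\<in>{j. i < j}. q i j * fz)"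
    by (rule GL2) (simp add: qsym)
  have R: "(\<Sum>i\<in>UNIV. \<Sum>j\<in>{j. i < j}. q i j * (k * fz - b i j))
      = k * (\<Sum>i\<in>UNIV. \<Sum>j\<in>{j. i < j}. q i j * fz) - (\<Sum>i\<in>UNIV. \<Sum>j\<in>{j. i < j}. q i j * b i j)"
    by (simp add: right_diff_distrib sum_subtractf sum_distrib_left mult_ac)
  have "(\<Sum>i\<in>UNIV. x $ i * (p i + k * (\<Sum>j\<in>UNIV - {i}. x $ j / (x $ i - x $ j)\<^sup>2 * b i j + cc i j x * d j i))
          + k * (\<Sum>j\<in>UNIV - {i}. cc i j x * (x $ j * d i j
               + k * (\<Sum>l\<in>UNIV - {i}. cc i l (act x (tr i j)) * e i j l))))
      = (\<Sum>i\<in>UNIV. x $ i * p i + (\<Sum>j\<in>UNIV - {i}. Z i j))"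
    by (rule sum.cong[OF refl], rule per_i)
  also have "\<dots> = (\<Sum>i\<in>UNIV. x $ i * p i) + (\<Sum>i\<in>UNIV. \<Sum>j\<in>UNIV - {i}. Z i j)"
    by (rule sum.distrib)
  finally have L: "(\<Sum>i\<in>UNIV. x $ i * (p i + k * (\<Sum>j\<in>UNIV - {i}. x $ j / (x $ i - x $ j)\<^sup>2 * b i j + cc i j x * d j i))
          + k * (\<Sum>j\<in>UNIV - {i}. cc i j x * (x $ j * d i j
               + k * (\<Sum>l\<in>UNIV - {i}. cc i l (act x (tr i j)) * e i j l))))
      = (\<Sum>i\<in>UNIV. x $ i * p i) + (\<Sum>i\<in>UNIV. \<Sum>j\<in>UNIV - {i}. Z i j)" .
  show ?thesis
    unfolding L sumZ F0 H0 Qb Qf q_def[symmetric] R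
    by (simp add: algebra_simps)
qed

lemma act_act: "act (act x w1) w2 = act x (w1 \<circ> w2)"
  by (simp add: act_def vec_eq_iff)

lemma act_id: "act x id = x"
  by (simp add: act_def vec_eq_iff)

lemma matrix_inv_mat1_mv: "matrix_inv (mat 1 :: 'a::field^'n^'n) *v v = v"
proof -
  have i: "invertible (mat 1 :: 'a^'n^'n)" unfolding invertible_def by (intro exI[of _ "mat 1"]) simp
  have "mat 1 *v v = v" by simp
  then show ?thesis using inv_mv_eq[OF i] by metis
qed

lemma hasds_cc:
  assumes "x $ i \<noteq> x $ j" "i \<noteq> j"
  shows "hasds i (cc i j) x (x $ j / (x $ i - x $ j)\<^sup>2)"
proof -
  have d: "x $ i - x $ j \<noteq> 0" using assms by simp
  have eq: "(\<lambda>t. cc i j (x + t *s axis i 1)) = (\<lambda>t. (if i < j then 1 else 0) - (x $ i + t) / (x $ i + t - x $ j))"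
    using assms(2) by (simp add: cc_def axis_def)
  have "((\<lambda>t. (if i < j then 1 else 0) - (x $ i + t) / (x $ i + t - x $ j)) has_field_derivative
      - ((1 * (x $ i + 0 - x $ j) - (x $ i + 0) * 1) / (x $ i + 0 - x $ j)^2)) (at 0)"
    using d by (auto intro!: derivative_eq_intros simp: power2_eq_square)
  moreover have "- ((1 * (x $ i + 0 - x $ j) - (x $ i + 0) * 1) / (x $ i + 0 - x $ j)^2) = x $ j / (x $ i - x $ j)\<^sup>2"
    by (simp add: field_simps)
  ultimately show ?thesis unfolding hasds_def eq by simp
qed

context setting begin

lemma cocycle_mv:
  assumes y: "y \<in> \<Omega>" and w1: "w1 permutes UNIV" and w2: "w2 permutes UNIV"
  shows "matrix_inv (M w1 y) *v (matrix_inv (M w2 (act y w1)) *v v)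
       = matrix_inv (M (w1 \<circ> w2) y) *v v"
  unfolding M_cocycle[OF w1 w2 y]
  by (rule matrix_inv_mult_mv[symmetric]) (rule M_GL[OF w2 act_in[OF y w1]], rule M_GL[OF w1 y])

lemma Uop_cong:
  assumes eq: "\<And>z. z \<in> \<Omega> \<Longrightarrow> g1 z = g2 z" and y: "y \<in> \<Omega>"
  shows "Uop \<kappa> rho i g1 y = Uop \<kappa> rho i g2 y"
proof -
  have pdeq: "pd i (\<lambda>z. z $ i *s g1 z) y = pd i (\<lambda>z. z $ i *s g2 z) y"
    unfolding pd_def
  proof (rule arg_cong[where f=vec_lambda], rule ext, rule deriv_cong_ev[OF _ refl])
    fix a
    show "\<forall>\<^sub>F t in nhds 0. ((y + t *s axis i 1) $ i *s g1 (y + t *s axis i 1)) $ a =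
        ((y + t *s axis i 1) $ i *s g2 (y + t *s axis i 1)) $ a"
      using line_ev[OF y, of i] by eventually_elim (simp add: eq)
  qed
  have at: "g1 (act y (Transposition.transpose i j)) = g2 (act y (Transposition.transpose i j))" for j
    by (rule eq[OF act_in[OF y tr_perm]])
  show ?thesis unfolding Uop_def Dop_def pdeq at eq[OF y] by simp
qed

end

theorem theorem1:
  fixes lam :: "nat list"
    and rho :: "('n::{finite,linorder} \<Rightarrow> 'n::{finite,linorder}) \<Rightarrow> complex^'k::finite^'k"
    and \<kappa> :: real
    and \<Omega> :: "(complex^'n::{finite,linorder}) set"
    and L :: "complex^'n::{finite,linorder} \<Rightarrow> complex^'k^'k"
    and M :: "('n::{finite,linorder} \<Rightarrow> 'n::{finite,linorder}) \<Rightarrow> complex^'n::{finite,linorder} \<Rightarrow> complex^'k^'k"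
    and f :: "complex^'n::{finite,linorder} \<Rightarrow> complex^'k"
    and x :: "complex^'n::{finite,linorder}"
  defines "\<gamma> \<equiv> real_of_int (S1 lam) / real CARD('n::{finite,linorder})"
  assumes part: "is_partition lam CARD('n)"
    and not_row: "lam \<noteq> [CARD('n)]"
    and not_col: "lam \<noteq> replicate CARD('n) 1"
    and rep: "irrep_of lam rho"
    and \<Omega>_open: "open \<Omega>"
    and \<Omega>_reg: "\<Omega> \<subseteq> regular"
    and \<Omega>_inv: "\<And>w. w permutes UNIV \<Longrightarrow> (\<lambda>y. act y w) ` \<Omega> = \<Omega>"
    and L_holo: "holo_mat L \<Omega>"
    and L_inv: "\<And>y. y \<in> \<Omega> \<Longrightarrow> invertible (L y)"
    and L_pde: "\<And>y i. y \<in> \<Omega> \<Longrightarrow>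
       pdm i L y = \<kappa> *\<^sub>R (L y **
         ((\<Sum>j\<in>UNIV - {i}. mat (1 / (y $ i - y $ j)) ** rho (Transposition.transpose i j))
          - mat (complex_of_real \<gamma> / y $ i)))"
    and M_lc: "\<And>w y. w permutes UNIV \<Longrightarrow> y \<in> \<Omega> \<Longrightarrow>
       \<exists>e>0. \<forall>z\<in>\<Omega>. dist z y < e \<longrightarrow> M w z = M w y"
    and M_GL: "\<And>w y. w permutes UNIV \<Longrightarrow> y \<in> \<Omega> \<Longrightarrow> invertible (M w y)"
    and M_id: "\<And>y. y \<in> \<Omega> \<Longrightarrow> M id y = mat 1"
    and M_cocycle: "\<And>w1 w2 y. w1 permutes UNIV \<Longrightarrow> w2 permutes UNIV \<Longrightarrow> y \<in> \<Omega> \<Longrightarrow>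
       M (w1 \<circ> w2) y = M w2 (act y w1) ** M w1 y"
    and L_equiv: "\<And>w y. w permutes UNIV \<Longrightarrow> y \<in> \<Omega> \<Longrightarrow>
       L (act y w) = M w y ** L y ** rho w"
    and f_holo: "holo_vec f \<Omega>"
    and x_in: "x \<in> \<Omega>"
  shows
    "(let c = 1 + complex_of_real (\<kappa> * \<gamma>);
          V = (\<lambda>i g y. Uop \<kappa> rho i g y - c *s g y);
          h = (\<lambda>y. matrix_inv (L y) *v f y)
      in L x *v (\<Sum>i\<in>UNIV. V i (V i h) x))
     = (\<Sum>i\<in>UNIV. (x $ i) *s pd i (\<lambda>y. (y $ i) *s pd i f y) x)
       - complex_of_real (2 * \<kappa>) *s
         (\<Sum>i\<in>UNIV. \<Sum>j\<in>{j. i < j}.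
            (x $ i * x $ j / (x $ i - x $ j)\<^sup>2) *s
              (complex_of_real \<kappa> *s f x - sigmaM M (Transposition.transpose i j) f x))"
proof -
  interpret S: setting rho \<kappa> \<Omega> L M \<gamma>
    apply unfold_locales
    apply (rule \<Omega>_open)
    apply (rule \<Omega>_reg)
    apply (rule \<Omega>_inv, assumption)
    apply (rule L_holo)
    apply (rule L_inv, assumption)
    apply (rule L_pde, assumption)
    apply (rule M_lc, assumption, assumption)
    apply (rule M_GL, assumption, assumption)
    apply (rule M_id, assumption)
    apply (rule M_cocycle, assumption, assumption, assumption)
    apply (rule L_equiv, assumption, assumption)
    done
  define c where "c = 1 + complex_of_real (\<kappa> * \<gamma>)"
  define V where "V = (\<lambda>i g y. Uop \<kappa> rho i g y - c *s g y)"
  define h where "h = (\<lambda>y. matrix_inv (L y) *v f y)"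
  define Wf where "Wf i z = z $ i *s pd i f z + complex_of_real \<kappa> *s
      (\<Sum>j\<in>UNIV - {i}. cc i j z *s sigmaM M (tr i j) f z)" for i z
  have lh: "lineholo i f \<Omega>" for i by (rule holo_vec_lineholo[OF f_holo])
  have hf: "z \<in> \<Omega> \<Longrightarrow> hasd i f z (pd i f z)" for i z using lineholo_hasd[OF lh] by blast
  have VWf: "V i h z = matrix_inv (L z) *v Wf i z" if z: "z \<in> \<Omega>" for i z
  proof -
    have "L z *v V i h z = Wf i z"
      unfolding V_def h_def c_def Wf_def by (rule S.key1[OF z hf[OF z]])
    then show ?thesis using inv_mv_eq[OF L_inv[OF z]] by blast
  qed
  have VV: "V i (V i h) x = V i (\<lambda>z. matrix_inv (L z) *v Wf i z) x" for i
  proof -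
    have "Uop \<kappa> rho i (V i h) x = Uop \<kappa> rho i (\<lambda>z. matrix_inv (L z) *v Wf i z) x"
      by (rule S.Uop_cong[OF VWf x_in]) 
    moreover have "V i g x = Uop \<kappa> rho i g x - c *s g x" for g by (simp add: V_def)
    ultimately show ?thesis using VWf[OF x_in] by metis
  qed
  define PP where "PP i = pd i (\<lambda>y. y $ i *s pd i f y) x" for i
  define B where "B i j = sigmaM M (tr i j) f x" for i j
  define D where "D i j = matrix_inv (M (tr i j) x) *v pd i f (act x (tr i j))" for i j
  define E where "E i j l = matrix_inv (M (tr i j) x) *v sigmaM M (tr i l) f (act x (tr i j))" for i j l
  define DW where "DW i = PP i + complex_of_real \<kappa> *s
      (\<Sum>j\<in>UNIV - {i}. (x $ j / (x $ i - x $ j)\<^sup>2) *s B i j + cc i j x *s D j i)" for i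
  have xne: "x $ a \<noteq> x $ b" if "a \<noteq> b" for a b using S.reg_ne[OF x_in that] .
  have hPP: "hasd i (\<lambda>y. y $ i *s pd i f y) x (PP i)" for i
  proof -
    have "hasd i (pd i f) x (pd i (pd i f) x)"
      by (rule lineholo_hasd[OF lineholo_pd[OF lh \<Omega>_open] x_in])
    from hasd_scal[OF hasds_coord_same this]
    have hv: "hasd i (\<lambda>y. y $ i *s pd i f y) x (1 *s pd i f x + x $ i *s pd i (pd i f) x)" .
    then have "PP i = 1 *s pd i f x + x $ i *s pd i (pd i f) x" unfolding PP_def by (rule hasd_pd)
    then show ?thesis using hv by simp
  qed
  have hW: "hasd i (Wf i) x (DW i)" for i
  proof -
    have hs: "hasd i (\<lambda>z. cc i j z *s sigmaM M (tr i j) f z) x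
        ((x $ j / (x $ i - x $ j)\<^sup>2) *s B i j + cc i j x *s D j i)" if j: "j \<in> UNIV - {i}" for j
    proof -
      have ij: "i \<noteq> j" using j by simp
      have sh: "hasd i (sigmaM M (tr i j) f) x (matrix_inv (M (tr i j) x) *v pd j f (act x (tr i j)))"
        by (rule S.sigma_hasd[OF x_in hf[OF S.act_in[OF x_in S.tr_perm]]])
      have "D j i = matrix_inv (M (tr i j) x) *v pd j f (act x (tr i j))"
        unfolding D_def by (simp add: transpose_commute)
      then show ?thesis unfolding B_def
        using hasd_scal[OF hasds_cc[OF xne[OF ij] ij] sh] by simp
    qed
    show ?thesis unfolding Wf_def[abs_def] DW_def
      by (rule hasd_add[OF hPP hasd_cscale[OF hasd_sum[OF finite hs]]]) 
  qed
  have key2: "L x *v V i (\<lambda>z. matrix_inv (L z) *v Wf i z) x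
      = x $ i *s DW i + complex_of_real \<kappa> *s (\<Sum>j\<in>UNIV - {i}. cc i j x *s sigmaM M (tr i j) (Wf i) x)" for i
    unfolding V_def c_def using S.key1[OF x_in hW[of i]] hasd_pd[OF hW[of i]] by simp
  have sW: "sigmaM M (tr i j) (Wf i) x = x $ j *s D i j + complex_of_real \<kappa> *s
       (\<Sum>l\<in>UNIV - {i}. cc i l (act x (tr i j)) *s E i j l)" for i j
    unfolding sigmaM_def Wf_def D_def E_def
    by (simp add: mv_add mv_scale mv_vsum act_tr_i)
  have LHS: "L x *v (\<Sum>i\<in>UNIV. V i (V i h) x) = (\<Sum>i\<in>UNIV. x $ i *s DW i + complex_of_real \<kappa> *s
      (\<Sum>j\<in>UNIV - {i}. cc i j x *s (x $ j *s D i j + complex_of_real \<kappa> *s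
       (\<Sum>l\<in>UNIV - {i}. cc i l (act x (tr i j)) *s E i j l))))"
    unfolding mv_vsum VV key2 sW ..
  have Bsym: "B j i = B i j" for i j unfolding B_def by (simp add: transpose_commute)
  have Ejj: "E i j j = f x" if "i \<noteq> j" for i j
    unfolding E_def sigmaM_def
    using S.cocycle_mv[OF x_in S.tr_perm S.tr_perm, of i j i j "f (act (act x (tr i j)) (tr i j))"]
    by (simp add: act_act act_id S.M_id[OF x_in] matrix_inv_mat1_mv)
  have Erot: "E j l i = E i j l" if d: "i \<noteq> j" "i \<noteq> l" "j \<noteq> l" for i j l
  proof -
    have p: "tr j l \<circ> tr j i = tr i j \<circ> tr i l"
      using d by (auto simp: fun_eq_iff Transposition.transpose_def)
    have e: "E a b c = matrix_inv (M (tr a b \<circ> tr a c) x) *v f (act x (tr a b \<circ> tr a c))" for a b c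
      unfolding E_def sigmaM_def
      using S.cocycle_mv[OF x_in S.tr_perm S.tr_perm, of a b a c "f (act (act x (tr a b)) (tr a c))"]
      by (simp add: act_act)
    show ?thesis unfolding e p ..
  qed
  have letE: "(let c = 1 + complex_of_real (\<kappa> * \<gamma>);
          V = (\<lambda>i g y. Uop \<kappa> rho i g y - c *s g y);
          h = (\<lambda>y. matrix_inv (L y) *v f y)
      in L x *v (\<Sum>i\<in>UNIV. V i (V i h) x)) = L x *v (\<Sum>i\<in>UNIV. V i (V i h) x)"
    by (simp only: Let_def V_def c_def h_def)
  show ?thesis
    unfolding letE LHS
    unfolding DW_def PP_def[symmetric] B_def[symmetric]
    apply (simp only: vec_eq_iff vector_add_component vector_smult_component sum_component vector_minus_component)
    apply (rule allI)
  proof -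
    fix a
    have fa: "(\<Sum>i\<in>UNIV. x $ i * (PP i $ a + complex_of_real \<kappa> * (\<Sum>j\<in>UNIV - {i}. x $ j / (x $ i - x $ j)\<^sup>2 * B i j $ a + cc i j x * D j i $ a))
          + complex_of_real \<kappa> * (\<Sum>j\<in>UNIV - {i}. cc i j x * (x $ j * D i j $ a
               + complex_of_real \<kappa> * (\<Sum>l\<in>UNIV - {i}. cc i l (act x (tr i j)) * E i j l $ a))))
      = (\<Sum>i\<in>UNIV. x $ i * PP i $ a) - 2 * complex_of_real \<kappa> * (\<Sum>i\<in>UNIV. \<Sum>j\<in>{j. i < j}.
            x $ i * x $ j / (x $ i - x $ j)\<^sup>2 * (complex_of_real \<kappa> * f x $ a - B i j $ a))"
    proof (rule final_alg_c[where x=x and k="complex_of_real \<kappa>" and fz="f x $ a" and p="\<lambda>i. PP i $ a"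
          and b="\<lambda>i j. B i j $ a" and d="\<lambda>i j. D i j $ a" and e="\<lambda>i j l. E i j l $ a"])
      show "\<And>c d. c \<noteq> d \<Longrightarrow> x $ c \<noteq> x $ d" by (rule xne)
      show "\<And>i j. B j i $ a = B i j $ a" by (simp add: Bsym)
      show "\<And>i j. i \<noteq> j \<Longrightarrow> E i j j $ a = f x $ a" by (simp add: Ejj)
      show "\<And>i j l. i \<noteq> j \<Longrightarrow> i \<noteq> l \<Longrightarrow> j \<noteq> l \<Longrightarrow> E j l i $ a = E i j l $ a" by (simp add: Erot)
    qed
    then show "(\<Sum>i\<in>UNIV. x $ i * (PP i $ a + complex_of_real \<kappa> * (\<Sum>j\<in>UNIV - {i}. x $ j / (x $ i - x $ j)\<^sup>2 * B i j $ a + cc i j x * D j i $ a))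
          + complex_of_real \<kappa> * (\<Sum>j\<in>UNIV - {i}. cc i j x * (x $ j * D i j $ a
               + complex_of_real \<kappa> * (\<Sum>l\<in>UNIV - {i}. cc i l (act x (tr i j)) * E i j l $ a))))
      = (\<Sum>i\<in>UNIV. x $ i * PP i $ a) - complex_of_real (2 * \<kappa>) * (\<Sum>i\<in>UNIV. \<Sum>j\<in>{j. i < j}.
            x $ i * x $ j / (x $ i - x $ j)\<^sup>2 * (complex_of_real \<kappa> * f x $ a - B i j $ a))"
      by simp
  qed
qed

end
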